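(* Let $G_1$ be an $r_1$-regular graph with $r_1\ge 1$ on $n_1$ vertices and $m_1$ edges, and let $G_2$ be an $r_2$-regular graph with $r_2\ge1$ on $n_2$ vertices. Let $0=\mu_1,\mu_2,\ldots,\mu_{n_1}$ be the normalized Laplacian eigenvalues of $G_1$ and $0=\nu_1,\nu_2,\ldots,\nu_{n_2}$ those of $G_2$ (listed with multiplicity). Then the normalized Laplacian spectrum (as a multiset) of the subdivision-edge join $G_1\veebar G_2$ consists of: (i) $0$; (ii) $1$, with multiplicity $m_1-n_1$; (iii) $\dfrac{m_1+r_2\nu_i}{r_2+m_1}$ for $i=2,\ldots,n_2$; (iv) for each $i=2,\ldots,n_1$, the two roots of $(x-1)^2-\dfrac{2-\mu_i}{2+n_2}=0$; (v) the two roots of $x^2-\left(2+\dfrac{m_1}{r_2+m_1}\right)x+\dfrac{2m_1}{r_2+m_1}+\dfrac{n_2r_2}{(2+n_2)(r_2+m_1)}=0$. (If $m_1<n_1$, which can only happen when $r_1=1$, item (ii) means that $n_1-m_1$ copies of $1$ are removed from the multiset formed by items (i), (iii), (iv), (v).) Equivalently, the characteristic polynomial of $\mathcal{L}(G_1\veebar G_2)$ equals $$x(x-1)^{m_1-n_1}\left(x^2-\left(2+\tfrac{m_1}{r_2+m_1}\right)x+\tfrac{2m_1}{r_2+m_1}+\tfrac{n_2r_2}{(2+n_2)(r_2+m_1)}\right)\prod_{i=2}^{n_1}\left((x-1)^2-\tfrac{2-\mu_i}{2+n_2}\right)\prod_{i=2}^{n_2}\left(x-\tfrac{m_1+r_2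\nu_i}{r_2+m_1}\right).$$
   Context: All graphs are finite and simple. For a graph $G$ without isolated vertices, with adjacency matrix $A(G)$ and diagonal degree matrix $D(G)$, the normalized Laplacian matrix is $\mathcal{L}(G)=I-D(G)^{-1/2}A(G)D(G)^{-1/2}$; its eigenvalues (with multiplicity) form the normalized Laplacian spectrum of $G$. The subdivision graph $S(G)$ of $G$ is obtained by inserting a new vertex into every edge of $G$; the set of these new vertices is denoted $I(G)$. The subdivision-edge join $G_1\veebar G_2$ of graphs $G_1,G_2$ is the graph obtained from $S(G_1)$ and (a disjoint copy of) $G_2$ by joining each vertex of $I(G_1)$ with every vertex of $V(G_2)$. *)

theory Defs
  imports "Jordan_Normal_Form.Char_Poly"
begin

definition simple_graph :: "'a set \<Rightarrow> 'a set set \<Rightarrow> bool" where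
  "simple_graph V E \<longleftrightarrow> finite V \<and> (\<forall>e\<in>E. \<exists>u v. e = {u, v} \<and> u \<noteq> v \<and> u \<in> V \<and> v \<in> V)"

definition degree :: "'a set set \<Rightarrow> 'a \<Rightarrow> nat" where
  "degree E v = card {e \<in> E. v \<in> e}"

definition regular :: "'a set \<Rightarrow> 'a set set \<Rightarrow> nat \<Rightarrow> bool" where
  "regular V E r \<longleftrightarrow> (\<forall>v\<in>V. degree E v = r)"

text \<open>Entry (u,v) of the normalized Laplacian I - D^(-1/2) A D^(-1/2) (simple graph, so A has zero diagonal).\<close>
definition nlap_entry :: "'a set set \<Rightarrow> 'a \<Rightarrow> 'a \<Rightarrow> real" where
  "nlap_entry E u v =
     (if u = v then 1 else 0)
     - (if {u, v} \<in> E then 1 / sqrt (real (degree E u) * real (degree E v)) else 0)"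

text \<open>An (arbitrary, fixed) enumeration of the vertex set; the characteristic polynomial does not depend on it.\<close>
definition vertex_enum :: "'a set \<Rightarrow> nat \<Rightarrow> 'a" where
  "vertex_enum V = (SOME f. bij_betw f {..<card V} V)"

definition nlap_matrix :: "'a set \<Rightarrow> 'a set set \<Rightarrow> real mat" where
  "nlap_matrix V E = mat (card V) (card V)
     (\<lambda>(i, j). nlap_entry E (vertex_enum V i) (vertex_enum V j))"

text \<open>Subdivision-edge join G1 \<veebar> G2. Vertices: Inl (Inl v) for v in V1, Inl (Inr e) for e in E1
  (the set I(G1) of subdivision vertices), Inr w for w in V2.\<close>
definition sej_vertices :: "'a set \<Rightarrow> 'a set set \<Rightarrow> 'b set \<Rightarrow> (('a + 'a set) + 'b) set" where
  "sej_vertices V1 E1 V2 = (Inl \<circ> Inl) ` V1 \<union> (Inl \<circ> Inr) ` E1 \<union> Inr ` V2"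

definition sej_edges :: "'a set \<Rightarrow> 'a set set \<Rightarrow> 'b set \<Rightarrow> 'b set set \<Rightarrow> (('a + 'a set) + 'b) set set" where
  "sej_edges V1 E1 V2 E2 =
     {{Inl (Inl u), Inl (Inr e)} | u e. e \<in> E1 \<and> u \<in> e}
     \<union> (\<lambda>e. Inr ` e) ` E2
     \<union> {{Inl (Inr e), Inr w} | e w. e \<in> E1 \<and> w \<in> V2}"

end

theory Submission imports Defs begin

lemma det_perm_sim:
  fixes A :: "'a :: comm_ring_1 mat"
  assumes A: "A \<in> carrier_mat n n" and p: "p permutes {0..<n}"
  shows "det (mat n n (\<lambda>(i,j). A $$ (p i, p j))) = det A"
proof -
  define B where "B = mat n n (\<lambda>(i,j). A $$ (p i, j))"
  have B: "B \<in> carrier_mat n n" unfolding B_def by auto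
  have dB: "det B = signof p * det A" unfolding B_def by (rule det_permute_rows[OF A p])
  define C where "C = mat n n (\<lambda>(i,j). transpose_mat B $$ (p i, j))"
  have dC: "det C = signof p * det (transpose_mat B)" unfolding C_def
    by (rule det_permute_rows[OF _ p], use B in auto)
  have pi: "i < n \<Longrightarrow> p i < n" for i using p by (simp add: permutes_in_image)
  have "mat n n (\<lambda>(i,j). A $$ (p i, p j)) = transpose_mat C"
    by (rule eq_matI, auto simp: C_def B_def pi)
  hence "det (mat n n (\<lambda>(i,j). A $$ (p i, p j))) = det C"
    using det_transpose[of C n] by (simp add: C_def)
  also have "\<dots> = signof p * signof p * det A" using dC det_transpose[OF B] dB by simp
  also have "signof p * signof p = (1::'a)" by (cases rule: sign_cases[of p]) auto
  finally show ?thesis by simp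
qed

lemma det_enum_change:
  fixes F :: "'v \<Rightarrow> 'v \<Rightarrow> 'a :: comm_ring_1"
  assumes e: "bij_betw e {..<n} V" and g: "bij_betw g {..<n} V"
  shows "det (mat n n (\<lambda>(i,j). F (e i) (e j))) = det (mat n n (\<lambda>(i,j). F (g i) (g j)))"
proof -
  define p where "p = (\<lambda>i. if i < n then inv_into {..<n} e (g i) else i)"
  have bp: "bij_betw (inv_into {..<n} e \<circ> g) {..<n} {..<n}"
    by (rule bij_betw_trans[OF g bij_betw_inv_into[OF e]])
  have "bij_betw p {..<n} {..<n}"
    by (rule bij_betw_cong[THEN iffD1, OF _ bp], auto simp: p_def)
  hence pp: "p permutes {0..<n}"
    by (intro bij_imp_permutes) (auto simp: p_def atLeast0LessThan)
  have ep: "i < n \<Longrightarrow> e (p i) = g i" for i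
  proof -
    assume i: "i < n"
    have "g i \<in> e ` {..<n}" using i e g by (auto simp: bij_betw_def)
    thus ?thesis using i unfolding p_def by (simp add: f_inv_into_f)
  qed
  have "det (mat n n (\<lambda>(i,j). F (e i) (e j))) =
     det (mat n n (\<lambda>(i,j). mat n n (\<lambda>(i,j). F (e i) (e j)) $$ (p i, p j)))"
    by (rule det_perm_sim[symmetric, OF _ pp], auto)
  also have "mat n n (\<lambda>(i,j). mat n n (\<lambda>(i,j). F (e i) (e j)) $$ (p i, p j))
     = mat n n (\<lambda>(i,j). F (g i) (g j))"
    using pp by (intro eq_matI) (auto simp: ep permutes_in_image)
  finally show ?thesis .
qed

lemma char_poly_eval:
  fixes A :: "'a :: field mat"
  assumes A: "A \<in> carrier_mat n n"
  shows "poly (char_poly A) x = det (mat n n (\<lambda>(i,j). (if i = j then x else 0) - A $$ (i,j)))"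
proof -
  have "poly (char_poly A) x = det (- char_matrix A x)" by (rule char_poly_matrix[OF A])
  also have "- char_matrix A x = mat n n (\<lambda>(i,j). (if i = j then x else 0) - A $$ (i,j))"
    using A by (intro eq_matI) (auto simp: char_matrix_def)
  finally show ?thesis .
qed

lemma sum_delta_mult: "(\<Sum>ia = 0..<(m::nat). f ia * (if ia = j then 1 else 0)) = (if j < m then f j else (0::'a::semiring_1))"
  by (induct m) (auto simp: less_Suc_eq)

lemma det_schur_scalar:
  fixes B C D :: "'a :: field mat"
  assumes B: "B \<in> carrier_mat m k" and C: "C \<in> carrier_mat k m" and D: "D \<in> carrier_mat k k"
    and y: "y \<noteq> 0"
  shows "det (four_block_mat (y \<cdot>\<^sub>m 1\<^sub>m m) B C D) = y ^ m * det (D - (1/y) \<cdot>\<^sub>m (C * B))"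
proof -
  define L where "L = four_block_mat (1\<^sub>m m) (0\<^sub>m m k) (- ((1/y) \<cdot>\<^sub>m C)) (1\<^sub>m k)"
  define M where "M = four_block_mat (y \<cdot>\<^sub>m 1\<^sub>m m) B C D"
  have L: "L \<in> carrier_mat (m+k) (m+k)" unfolding L_def by auto
  have M: "M \<in> carrier_mat (m+k) (m+k)" unfolding M_def using D by auto
  have dL: "det L = 1" unfolding L_def
    by (subst det_four_block_mat_upper_right_zero[of _ m _ k]) (use C in auto)
  have "L * M = four_block_mat (1\<^sub>m m * (y \<cdot>\<^sub>m 1\<^sub>m m) + 0\<^sub>m m k * C) (1\<^sub>m m * B + 0\<^sub>m m k * D)
      (- ((1/y) \<cdot>\<^sub>m C) * (y \<cdot>\<^sub>m 1\<^sub>m m) + 1\<^sub>m k * C) (- ((1/y) \<cdot>\<^sub>m C) * B + 1\<^sub>m k * D)"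
    unfolding L_def M_def by (rule mult_four_block_mat) (use B C D in auto)
  also have "\<dots> = four_block_mat (y \<cdot>\<^sub>m 1\<^sub>m m) B (0\<^sub>m k m) (D - (1/y) \<cdot>\<^sub>m (C * B))"
  proof (rule cong_four_block_mat)
    show "1\<^sub>m m * (y \<cdot>\<^sub>m 1\<^sub>m m) + 0\<^sub>m m k * C = y \<cdot>\<^sub>m 1\<^sub>m m" using C by auto
    show "1\<^sub>m m * B + 0\<^sub>m m k * D = B" using B D by auto
    show "- ((1/y) \<cdot>\<^sub>m C) * (y \<cdot>\<^sub>m 1\<^sub>m m) + 1\<^sub>m k * C = 0\<^sub>m k m"
      using C y by (intro eq_matI) (auto simp: scalar_prod_def sum_delta_mult)
    show "- ((1/y) \<cdot>\<^sub>m C) * B + 1\<^sub>m k * D = D - (1/y) \<cdot>\<^sub>m (C * B)"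
      using B C D by (intro eq_matI) (auto simp: scalar_prod_def sum_distrib_left)
  qed
  finally have LM: "L * M = four_block_mat (y \<cdot>\<^sub>m 1\<^sub>m m) B (0\<^sub>m k m) (D - (1/y) \<cdot>\<^sub>m (C * B))" .
  have "det (L * M) = det L * det M" by (rule det_mult[OF L M])
  hence "det M = det (L * M)" using dL by simp
  also have "\<dots> = det (y \<cdot>\<^sub>m 1\<^sub>m m) * det (D - (1/y) \<cdot>\<^sub>m (C * B))" unfolding LM
    by (rule det_four_block_mat_lower_left_zero) (use B C D in auto)
  finally show ?thesis unfolding M_def by simp
qed

lemma det_one_plus_const:
  "det (mat n n (\<lambda>(i,j). (if i = j then 1 else 0) + t)) = 1 + t * of_nat n" (is "det ?A = _")
  for t :: "'a :: field"
proof -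
  define u where "u = mat n 1 (\<lambda>_. t)"
  define v where "v = mat 1 n (\<lambda>_. 1::'a)"
  define X where "X = four_block_mat (1\<^sub>m n) u (- v) (1\<^sub>m 1)"
  define R where "R = four_block_mat (1\<^sub>m n) (- u) (0\<^sub>m 1 n) (1\<^sub>m 1)"
  have u: "u \<in> carrier_mat n 1" and v: "v \<in> carrier_mat 1 n" by (auto simp: u_def v_def)
  have X: "X \<in> carrier_mat (n+1) (n+1)" and R: "R \<in> carrier_mat (n+1) (n+1)"
    by (auto simp: X_def R_def)
  have dR: "det R = 1" unfolding R_def
    by (subst det_four_block_mat_lower_left_zero[of _ n _ 1]) (use u in auto)
  have "X * R = four_block_mat (1\<^sub>m n * 1\<^sub>m n + u * 0\<^sub>m 1 n) (1\<^sub>m n * - u + u * 1\<^sub>m 1)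
     (- v * 1\<^sub>m n + 1\<^sub>m 1 * 0\<^sub>m 1 n) (- v * - u + 1\<^sub>m 1 * 1\<^sub>m 1)"
    unfolding X_def R_def by (rule mult_four_block_mat) (use u v in auto)
  also have "\<dots> = four_block_mat (1\<^sub>m n) (0\<^sub>m n 1) (- v) (mat 1 1 (\<lambda>_. 1 + t * of_nat n))"
    by (rule cong_four_block_mat; rule eq_matI)
       (use u v in \<open>auto simp: u_def v_def scalar_prod_def sum_delta_mult\<close>)
  finally have XR: "X * R = \<dots>" .
  have "det (X * R) = det X * det R" by (rule det_mult[OF X R])
  hence "det X = det (X * R)" using dR by simp
  also have "\<dots> = 1 + t * of_nat n" unfolding XR
    by (subst det_four_block_mat_upper_right_zero[of _ n _ 1]) (auto simp: v_def det_single)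
  finally have dX1: "det X = 1 + t * of_nat n" .
  have "R * X = four_block_mat (1\<^sub>m n * 1\<^sub>m n + - u * - v) (1\<^sub>m n * u + - u * 1\<^sub>m 1)
     (0\<^sub>m 1 n * 1\<^sub>m n + 1\<^sub>m 1 * - v) (0\<^sub>m 1 n * u + 1\<^sub>m 1 * 1\<^sub>m 1)"
    unfolding X_def R_def by (rule mult_four_block_mat) (use u v in auto)
  also have "\<dots> = four_block_mat ?A (0\<^sub>m n 1) (- v) (1\<^sub>m 1)"
    by (rule cong_four_block_mat; rule eq_matI)
       (use u v in \<open>auto simp: u_def v_def scalar_prod_def sum_delta_mult\<close>)
  finally have RX: "R * X = \<dots>" .
  have "det (R * X) = det R * det X" by (rule det_mult[OF R X])
  hence "det X = det (R * X)" using dR by simp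
  also have "\<dots> = det ?A" unfolding RX
    by (subst det_four_block_mat_upper_right_zero[of _ n _ 1]) (auto simp: v_def)
  finally show ?thesis using dX1 by simp
qed

lemma det_minus_const:
  fixes P :: "'a :: field mat"
  assumes P: "P \<in> carrier_mat n n" and rs: "\<And>i. i < n \<Longrightarrow> (\<Sum>j<n. P $$ (i,j)) = p" and p: "p \<noteq> 0"
  shows "det (mat n n (\<lambda>(i,j). P $$ (i,j) - c)) = det P * (1 - c * of_nat n / p)"
proof -
  define T where "T = mat n n (\<lambda>(i,j). (if i = j then 1 else 0) + (- c / p))"
  have T: "T \<in> carrier_mat n n" by (auto simp: T_def)
  have "P * T = mat n n (\<lambda>(i,j). P $$ (i,j) - c)"
  proof (rule eq_matI)
    fix i j assume i: "i < dim_row (mat n n (\<lambda>(i,j). P $$ (i,j) - c))"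
      and j: "j < dim_col (mat n n (\<lambda>(i,j). P $$ (i,j) - c))"
    have "(P * T) $$ (i,j) = (\<Sum>k = 0..<n. P $$ (i,k) * ((if k = j then 1 else 0) + (- c / p)))"
      using i j P T by (auto simp: scalar_prod_def T_def)
    also have "\<dots> = (\<Sum>k = 0..<n. P $$ (i,k) * (if k = j then 1 else 0)) + (\<Sum>k = 0..<n. P $$ (i,k)) * (- c / p)"
      by (simp add: right_diff_distrib sum_subtractf sum_divide_distrib sum_distrib_right)
    also have "\<dots> = P $$ (i,j) - c" using i j rs[of i] p by (simp add: sum_delta_mult lessThan_atLeast0)
    finally show "(P * T) $$ (i,j) = mat n n (\<lambda>(i,j). P $$ (i,j) - c) $$ (i,j)" using i j by simp
  qed (use P T in auto)
  hence "det (mat n n (\<lambda>(i,j). P $$ (i,j) - c)) = det P * det T" using det_mult[OF P T] by simp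
  also have "det T = 1 + (- c / p) * of_nat n" unfolding T_def by (rule det_one_plus_const)
  also have "det P * (1 + (- c / p) * of_nat n) = det P * (1 - c * of_nat n / p)" by (simp add: field_simps)
  finally show ?thesis .
qed

lemma det_block_const:
  fixes P C :: "'a :: field mat"
  assumes P: "P \<in> carrier_mat n n" and rsP: "\<And>i. i < n \<Longrightarrow> (\<Sum>j<n. P $$ (i,j)) = p" and p: "p \<noteq> 0"
    and C: "C \<in> carrier_mat k k" and rsC: "\<And>i. i < k \<Longrightarrow> (\<Sum>j<k. C $$ (i,j)) = c" and c: "c \<noteq> 0"
  shows "det (four_block_mat P (mat n k (\<lambda>_. q)) (mat k n (\<lambda>_. q)) C)
    = det P * det C * (1 - q * q * of_nat k * of_nat n / (p * c))"
proof -
  define s where "s = - q / c"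
  define N where "N = four_block_mat (1\<^sub>m n) (0\<^sub>m n k) (mat k n (\<lambda>_. s)) (1\<^sub>m k)"
  define M where "M = four_block_mat P (mat n k (\<lambda>_. q)) (mat k n (\<lambda>_. q)) C"
  have N: "N \<in> carrier_mat (n+k) (n+k)" and M: "M \<in> carrier_mat (n+k) (n+k)"
    using P C by (auto simp: N_def M_def)
  have dN: "det N = 1" unfolding N_def
    by (subst det_four_block_mat_upper_right_zero[of _ n _ k]) auto
  have "M * N = four_block_mat (P * 1\<^sub>m n + mat n k (\<lambda>_. q) * mat k n (\<lambda>_. s))
      (P * 0\<^sub>m n k + mat n k (\<lambda>_. q) * 1\<^sub>m k)
      (mat k n (\<lambda>_. q) * 1\<^sub>m n + C * mat k n (\<lambda>_. s)) (mat k n (\<lambda>_. q) * 0\<^sub>m n k + C * 1\<^sub>m k)"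
    unfolding M_def N_def by (rule mult_four_block_mat) (use P C in auto)
  also have "\<dots> = four_block_mat (mat n n (\<lambda>(i,j). P $$ (i,j) - q * q * of_nat k / c))
      (mat n k (\<lambda>_. q)) (0\<^sub>m k n) C"
  proof (rule cong_four_block_mat)
    show "P * 1\<^sub>m n + mat n k (\<lambda>_. q) * mat k n (\<lambda>_. s) = mat n n (\<lambda>(i,j). P $$ (i,j) - q * q * of_nat k / c)"
      using P c by (intro eq_matI) (auto simp: scalar_prod_def s_def)
    show "P * 0\<^sub>m n k + mat n k (\<lambda>_. q) * 1\<^sub>m k = mat n k (\<lambda>_. q)"
      using P by (intro eq_matI) (auto simp: scalar_prod_def sum_delta_mult)
    show "mat k n (\<lambda>_. q) * 1\<^sub>m n + C * mat k n (\<lambda>_. s) = 0\<^sub>m k n"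
    proof (rule eq_matI)
      fix i j assume i: "i < dim_row (0\<^sub>m k n :: 'a mat)" and j: "j < dim_col (0\<^sub>m k n :: 'a mat)"
      have "(mat k n (\<lambda>_. q) * 1\<^sub>m n + C * mat k n (\<lambda>_. s)) $$ (i,j)
          = q + (\<Sum>l = 0..<k. C $$ (i,l)) * s"
        using i j C by (auto simp: scalar_prod_def sum_delta_mult sum_distrib_right)
      also have "\<dots> = 0" using rsC[of i] i c by (simp add: lessThan_atLeast0 s_def)
      finally show "(mat k n (\<lambda>_. q) * 1\<^sub>m n + C * mat k n (\<lambda>_. s)) $$ (i,j) = 0\<^sub>m k n $$ (i,j)"
        using i j by simp
    qed (use C in auto)
    show "mat k n (\<lambda>_. q) * 0\<^sub>m n k + C * 1\<^sub>m k = C" using C by auto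
  qed
  finally have MN: "M * N = \<dots>" .
  have "det (M * N) = det M * det N" by (rule det_mult[OF M N])
  hence "det M = det (M * N)" using dN by simp
  also have "\<dots> = det (mat n n (\<lambda>(i,j). P $$ (i,j) - q * q * of_nat k / c)) * det C" unfolding MN
    by (rule det_four_block_mat_lower_left_zero) (use C in auto)
  also have "det (mat n n (\<lambda>(i,j). P $$ (i,j) - q * q * of_nat k / c))
     = det P * (1 - q * q * of_nat k / c * of_nat n / p)" by (rule det_minus_const[OF P rsP p])
  also have "det P * (1 - q * q * of_nat k / c * of_nat n / p) * det C
     = det P * det C * (1 - q * q * of_nat k * of_nat n / (p * c))" using p c by (simp add: field_simps)
  finally show ?thesis unfolding M_def .
qed

lemma enum_bij: assumes "finite V" shows "bij_betw (vertex_enum V) {..<card V} V"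
proof -
  obtain h where "bij_betw h {..<card V} V"
    using ex_bij_betw_nat_finite[OF assms] by (auto simp: atLeast0LessThan)
  thus ?thesis unfolding vertex_enum_def by (metis someI_ex)
qed

lemma sg_finite: "simple_graph V E \<Longrightarrow> finite V"
  by (simp add: simple_graph_def)

lemma sg_edge: "simple_graph V E \<Longrightarrow> e \<in> E \<Longrightarrow> \<exists>u v. e = {u,v} \<and> u \<noteq> v \<and> u \<in> V \<and> v \<in> V"
  by (simp add: simple_graph_def)

lemma sg_finite_E: assumes "simple_graph V E" shows "finite E"
proof -
  have "E \<subseteq> Pow V" using sg_edge[OF assms] by blast
  thus ?thesis using sg_finite[OF assms] finite_subset by blast
qed

lemma sg_edge_sub: "simple_graph V E \<Longrightarrow> e \<in> E \<Longrightarrow> e \<subseteq> V"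
  using sg_edge by blast

lemma sg_card_edge: "simple_graph V E \<Longrightarrow> e \<in> E \<Longrightarrow> card e = 2"
  using sg_edge by fastforce

lemma sg_no_loop: "simple_graph V E \<Longrightarrow> {u} \<notin> E"
  using sg_card_edge by fastforce

lemma sum_indicator: "finite A \<Longrightarrow> (\<Sum>x\<in>A. if P x then 1 else 0) = real (card {x\<in>A. P x})"
  by (simp add: sum.If_cases Int_def)

lemma enum_sum_edges:
  assumes G: "simple_graph V E" and h: "bij_betw h {..<m} E"
  shows "(\<Sum>l<m. if v \<in> h l then 1 else 0) = real (degree E v)"
proof -
  have "(\<Sum>l<m. if v \<in> h l then 1 else 0) = (\<Sum>e\<in>E. if v \<in> e then 1 else (0::real))"
    by (rule sum.reindex_bij_betw[OF h])
  also have "\<dots> = real (degree E v)" unfolding degree_def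
    by (rule sum_indicator[OF sg_finite_E[OF G]])
  finally show ?thesis .
qed

lemma nbr_card:
  assumes G: "simple_graph V E" and u: "u \<in> V"
  shows "card {w\<in>V. {u,w} \<in> E} = degree E u"
proof -
  have "bij_betw (\<lambda>w. {u,w}) {w\<in>V. {u,w} \<in> E} {e\<in>E. u \<in> e}"
  proof (rule bij_betwI')
    fix w w' assume "w \<in> {w\<in>V. {u,w} \<in> E}" "w' \<in> {w\<in>V. {u,w} \<in> E}"
    thus "({u, w} = {u, w'}) = (w = w')" by (auto simp: doubleton_eq_iff)
  next
    fix w assume "w \<in> {w\<in>V. {u,w} \<in> E}" thus "{u,w} \<in> {e\<in>E. u \<in> e}" by auto
  next
    fix e assume e: "e \<in> {e\<in>E. u \<in> e}"
    then obtain a b where ab: "e = {a,b}" "a \<noteq> b" "a \<in> V" "b \<in> V" using sg_edge[OF G] by blast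
    show "\<exists>w\<in>{w\<in>V. {u,w} \<in> E}. e = {u,w}"
    proof (cases "u = a")
      case True thus ?thesis using ab e by auto
    next
      case False hence "u = b" using ab e by auto
      thus ?thesis using ab e by (auto simp: insert_commute)
    qed
  qed
  thus ?thesis unfolding degree_def by (rule bij_betw_same_card)
qed

lemma enum_sum_nbrs:
  assumes G: "simple_graph V E" and e: "bij_betw e {..<n} V" and u: "u \<in> V"
  shows "(\<Sum>j<n. if {u, e j} \<in> E then 1 else 0) = real (degree E u)"
proof -
  have "(\<Sum>j<n. if {u, e j} \<in> E then 1 else 0) = (\<Sum>w\<in>V. if {u,w} \<in> E then 1 else (0::real))"
    by (rule sum.reindex_bij_betw[OF e])
  also have "\<dots> = real (degree E u)"
    by (subst sum_indicator[OF sg_finite[OF G]]) (simp add: nbr_card[OF G u])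
  finally show ?thesis .
qed

lemma common_edges:
  assumes G: "simple_graph V E" and u: "u \<in> V" and v: "v \<in> V"
  shows "card {e\<in>E. u \<in> e \<and> v \<in> e} = (if u = v then degree E u else if {u,v} \<in> E then 1 else 0)"
proof (cases "u = v")
  case True thus ?thesis by (simp add: degree_def)
next
  case False
  have "{e\<in>E. u \<in> e \<and> v \<in> e} = (if {u,v} \<in> E then {{u,v}} else {})"
  proof -
    have "e = {u,v}" if eE: "e \<in> E" and ue: "u \<in> e" and ve: "v \<in> e" for e
    proof -
      obtain a b where "e = {a,b}" using sg_edge[OF G eE] by blast
      thus ?thesis using ue ve False by blast
    qed
    thus ?thesis by (auto simp del: insert_iff)
  qed
  thus ?thesis using False by simp
qed

lemma handshake:
  assumes G: "simple_graph V E"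
  shows "(\<Sum>v\<in>V. degree E v) = 2 * card E"
proof -
  have fV: "finite V" and fE: "finite E" using sg_finite[OF G] sg_finite_E[OF G] by auto
  have dg: "degree E v = (\<Sum>e\<in>E. if v \<in> e then 1 else (0::nat))" for v
    unfolding degree_def card_eq_sum by (rule sum.inter_filter[OF fE])
  have "(\<Sum>v\<in>V. degree E v) = (\<Sum>v\<in>V. \<Sum>e\<in>E. if v \<in> e then 1 else (0::nat))"
    by (simp only: dg)
  also have "\<dots> = (\<Sum>e\<in>E. \<Sum>v\<in>V. if v \<in> e then 1 else (0::nat))" by (rule sum.swap)
  also have "\<dots> = (\<Sum>e\<in>E. 2)"
  proof (rule sum.cong[OF refl])
    fix e assume e: "e \<in> E"
    have "(\<Sum>v\<in>V. if v \<in> e then 1 else (0::nat)) = card {v\<in>V. v \<in> e}"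
      unfolding card_eq_sum by (rule sum.inter_filter[OF fV, symmetric])
    also have "{v\<in>V. v \<in> e} = e" using sg_edge_sub[OF G e] by blast
    also have "card e = 2" by (rule sg_card_edge[OF G e])
    finally show "(\<Sum>v\<in>V. if v \<in> e then 1 else (0::nat)) = 2" .
  qed
  also have "\<dots> = 2 * card E" by simp
  finally show ?thesis .
qed

lemma sej_A1: "{Inl (Inl u), Inl (Inr e)} \<in> sej_edges V1 E1 V2 E2 \<longleftrightarrow> e \<in> E1 \<and> u \<in> e"
  unfolding sej_edges_def by (auto simp: doubleton_eq_iff)

lemma sej_A2: "{Inl (Inr e), Inr w} \<in> sej_edges V1 E1 V2 E2 \<longleftrightarrow> e \<in> E1 \<and> w \<in> V2"
  unfolding sej_edges_def by (auto simp: doubleton_eq_iff)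

lemma sej_A3:
  fixes V1 :: "'a set" and V2 :: "'b set"
  shows "{Inr w, Inr w'} \<in> sej_edges V1 E1 V2 E2 \<longleftrightarrow> {w, w'} \<in> E2"
proof -
  have 1: "{Inr w, Inr w'} \<in> sej_edges V1 E1 V2 E2 \<longleftrightarrow>
     (\<exists>e\<in>E2. Inr ` e = ({Inr w, Inr w'} :: (('a + 'a set) + 'b) set))"
    unfolding sej_edges_def by (auto simp: doubleton_eq_iff)
  show ?thesis unfolding 1
  proof
    assume "\<exists>e\<in>E2. Inr ` e = ({Inr w, Inr w'} :: (('a + 'a set) + 'b) set)"
    then obtain e where e: "e \<in> E2" "Inr ` e = ({Inr w, Inr w'} :: (('a + 'a set) + 'b) set)" by blast
    from e(2) have "(Inr :: 'b \<Rightarrow> ('a + 'a set) + 'b) ` e = Inr ` {w, w'}" by simp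
    hence "e = {w,w'}" by (metis inj_Inr inj_image_eq_iff)
    thus "{w,w'} \<in> E2" using e by simp
  next
    assume "{w,w'} \<in> E2" thus "\<exists>e\<in>E2. Inr ` e = ({Inr w, Inr w'} :: (('a + 'a set) + 'b) set)" by (intro bexI[of _ "{w,w'}"]) auto
  qed
qed

lemma sej_A4: "{Inl (Inl u), Inl (Inl v)} \<notin> sej_edges V1 E1 V2 E2"
  unfolding sej_edges_def by (auto simp: doubleton_eq_iff)

lemma sej_A5: "{Inl (Inl u), Inr w} \<notin> sej_edges V1 E1 V2 E2"
  unfolding sej_edges_def by (auto simp: doubleton_eq_iff)

lemma sej_A6: "{Inl (Inr e), Inl (Inr e')} \<notin> sej_edges V1 E1 V2 E2"
  unfolding sej_edges_def by (auto simp: doubleton_eq_iff)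

lemma sej_D1: "degree (sej_edges V1 E1 V2 E2) (Inl (Inl v)) = degree E1 v"
proof -
  have "{s \<in> sej_edges V1 E1 V2 E2. Inl (Inl v) \<in> s} = (\<lambda>e. {Inl (Inl v), Inl (Inr e)}) ` {e\<in>E1. v \<in> e}"
    unfolding sej_edges_def by (auto simp: doubleton_eq_iff)
  moreover have "inj_on (\<lambda>e. {Inl (Inl v), Inl (Inr e)} :: (('a + 'a set) + 'b) set) {e\<in>E1. v \<in> e}"
    by (auto simp: inj_on_def doubleton_eq_iff)
  ultimately show ?thesis unfolding degree_def by (simp add: card_image)
qed

lemma sej_D2:
  assumes G1: "simple_graph V1 E1" and G2: "simple_graph V2 E2" and e: "e \<in> E1"
  shows "degree (sej_edges V1 E1 V2 E2) (Inl (Inr e)) = 2 + card V2"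
proof -
  have fe: "finite e" using sg_card_edge[OF G1 e] card.infinite by fastforce
  have "{s \<in> sej_edges V1 E1 V2 E2. Inl (Inr e) \<in> s} =
     (\<lambda>u. {Inl (Inl u), Inl (Inr e)}) ` e \<union> (\<lambda>w. {Inl (Inr e), Inr w}) ` V2"
    using e unfolding sej_edges_def by (auto simp: doubleton_eq_iff)
  moreover have "card ((\<lambda>u. {Inl (Inl u), Inl (Inr e)}) ` e \<union> (\<lambda>w. {Inl (Inr e), Inr w}) ` V2
      :: (('a + 'a set) + 'b) set set) = card e + card V2"
  proof (subst card_Un_disjoint)
    show "card ((\<lambda>u. {Inl (Inl u), Inl (Inr e)}) ` e :: (('a + 'a set) + 'b) set set) +
      card ((\<lambda>w. {Inl (Inr e), Inr w}) ` V2 :: (('a + 'a set) + 'b) set set) = card e + card V2"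
      by (subst card_image, auto simp: inj_on_def doubleton_eq_iff)+
  qed (use fe sg_finite[OF G2] in \<open>auto simp: doubleton_eq_iff\<close>)
  ultimately show ?thesis unfolding degree_def using sg_card_edge[OF G1 e] by simp
qed

lemma sej_D3:
  assumes G1: "simple_graph V1 E1" and G2: "simple_graph V2 E2" and w: "w \<in> V2"
  shows "degree (sej_edges V1 E1 V2 E2) (Inr w) = degree E2 w + card E1"
proof -
  have "{s \<in> sej_edges V1 E1 V2 E2. Inr w \<in> s} =
     (\<lambda>e. Inr ` e) ` {e\<in>E2. w \<in> e} \<union> (\<lambda>e. {Inl (Inr e), Inr w}) ` E1"
    using w unfolding sej_edges_def by (auto simp: doubleton_eq_iff)
  moreover have "card ((\<lambda>e. Inr ` e) ` {e\<in>E2. w \<in> e} \<union> (\<lambda>e. {Inl (Inr e), Inr w}) ` E1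
      :: (('a + 'a set) + 'b) set set) = card {e\<in>E2. w \<in> e} + card E1"
  proof (subst card_Un_disjoint)
    have i1: "inj_on (\<lambda>e. (Inr :: 'b \<Rightarrow> ('a + 'a set) + 'b) ` e) {e\<in>E2. w \<in> e}"
      by (auto simp: inj_on_def inj_image_eq_iff)
    show "card ((\<lambda>e. Inr ` e) ` {e\<in>E2. w \<in> e} :: (('a + 'a set) + 'b) set set) +
      card ((\<lambda>e. {Inl (Inr e), Inr w}) ` E1 :: (('a + 'a set) + 'b) set set) = card {e\<in>E2. w \<in> e} + card E1"
      by (subst card_image[OF i1], subst card_image, auto simp: inj_on_def doubleton_eq_iff)
  qed (use sg_finite_E[OF G1] sg_finite_E[OF G2] in \<open>auto simp: doubleton_eq_iff\<close>)
  ultimately show ?thesis unfolding degree_def by simp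
qed

lemma sqrt_comm: "sqrt (a * b) = sqrt (b * (a::real))" by (simp add: mult.commute)

context
  fixes V1 :: "'a set" and E1 :: "'a set set" and V2 :: "'b set" and E2 :: "'b set set" and r1 r2 :: nat
  assumes G1: "simple_graph V1 E1" and G2: "simple_graph V2 E2"
    and reg1: "regular V1 E1 r1" and reg2: "regular V2 E2 r2"
begin

abbreviation "SE \<equiv> sej_edges V1 E1 V2 E2"

lemma ne_EE: "nlap_entry SE (Inl (Inr e)) (Inl (Inr e')) = (if e = e' then 1 else 0)"
  using sej_A6[of e e' V1 E1 V2 E2] by (auto simp: nlap_entry_def)

lemma ne_EV: assumes "e \<in> E1" "v \<in> V1"
  shows "nlap_entry SE (Inl (Inr e)) (Inl (Inl v)) =
    - (if v \<in> e then 1 / sqrt ((2 + real (card V2)) * real r1) else 0)"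
  using assms sej_A1[of v e V1 E1 V2 E2] sej_D1[of V1 E1 V2 E2 v] sej_D2[OF G1 G2 assms(1)] reg1
  by (auto simp: nlap_entry_def insert_commute regular_def)

lemma ne_VE: assumes "e \<in> E1" "v \<in> V1"
  shows "nlap_entry SE (Inl (Inl v)) (Inl (Inr e)) =
    - (if v \<in> e then 1 / sqrt ((2 + real (card V2)) * real r1) else 0)"
  using assms sej_A1[of v e V1 E1 V2 E2] sej_D1[of V1 E1 V2 E2 v] sej_D2[OF G1 G2 assms(1)] reg1
  by (auto simp: nlap_entry_def regular_def sqrt_comm[of "real r1"])

lemma ne_EW: assumes "e \<in> E1" "w \<in> V2"
  shows "nlap_entry SE (Inl (Inr e)) (Inr w) = - (1 / sqrt ((2 + real (card V2)) * (real r2 + real (card E1))))"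
  using assms sej_A2[of e w V1 E1 V2 E2] sej_D3[OF G1 G2 assms(2)] sej_D2[OF G1 G2 assms(1)] reg2
  by (auto simp: nlap_entry_def regular_def)

lemma ne_WE: assumes "e \<in> E1" "w \<in> V2"
  shows "nlap_entry SE (Inr w) (Inl (Inr e)) = - (1 / sqrt ((2 + real (card V2)) * (real r2 + real (card E1))))"
  using assms sej_A2[of e w V1 E1 V2 E2] sej_D3[OF G1 G2 assms(2)] sej_D2[OF G1 G2 assms(1)] reg2
  by (auto simp: nlap_entry_def regular_def insert_commute sqrt_comm[of "real r2 + _"])

lemma ne_VV: "nlap_entry SE (Inl (Inl u)) (Inl (Inl v)) = (if u = v then 1 else 0)"
  using sej_A4[of u v V1 E1 V2 E2] by (auto simp: nlap_entry_def)

lemma ne_VW: "nlap_entry SE (Inl (Inl u)) (Inr w) = 0"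
  using sej_A5[of u w V1 E1 V2 E2] by (auto simp: nlap_entry_def)

lemma ne_WV: "nlap_entry SE (Inr w) (Inl (Inl u)) = 0"
  using sej_A5[of u w V1 E1 V2 E2] by (auto simp: nlap_entry_def insert_commute)

lemma ne_WW: assumes "w \<in> V2" "w' \<in> V2"
  shows "nlap_entry SE (Inr w) (Inr w') = (if w = w' then 1 else 0)
     - (if {w, w'} \<in> E2 then 1 / (real r2 + real (card E1)) else 0)"
  using assms sej_A3[of w w' V1 E1 V2 E2] sej_D3[OF G1 G2 assms(1)] sej_D3[OF G1 G2 assms(2)] reg2
    sg_no_loop[OF G2, of w]
  by (auto simp: nlap_entry_def regular_def)

lemma nl_entry: assumes "u \<in> V1" "v \<in> V1"
  shows "nlap_entry E1 u v = (if u = v then 1 else 0) - (if {u,v} \<in> E1 then 1 / real r1 else 0)"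
  using assms reg1 sg_no_loop[OF G1, of u] by (auto simp: nlap_entry_def regular_def)

lemma nl_entry2: assumes "u \<in> V2" "v \<in> V2"
  shows "nlap_entry E2 u v = (if u = v then 1 else 0) - (if {u,v} \<in> E2 then 1 / real r2 else 0)"
  using assms reg2 sg_no_loop[OF G2, of u] by (auto simp: nlap_entry_def regular_def)

end


lemma prod_map_split:
  assumes "length xs = n" "n \<ge> 1"
  shows "(\<Prod>a\<leftarrow>xs. f a) = f (xs ! 0) * (\<Prod>i\<in>{1..<n}. f (xs ! i))"
proof -
  have "(\<Prod>a\<leftarrow>xs. f a) = (\<Prod>i\<in>{0..<n}. map f xs ! i)"
    using assms by (simp add: prod.list_conv_set_nth)
  also have "{0..<n} = insert 0 {1..<n}" using assms by auto
  also have "(\<Prod>i\<in>insert 0 {1..<n}. map f xs ! i) = f (xs ! 0) * (\<Prod>i\<in>{1..<n}. f (xs ! i))"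
    using assms by (subst prod.insert) auto
  finally show ?thesis .
qed

lemma scalar_id:
  fixes y k m r2 p K0 K d Z :: real
  assumes y: "y \<noteq> 0" and K0: "K0 \<noteq> 0" and p0: "p \<noteq> 0" and K: "K \<noteq> 0"
    and k: "2 + k \<noteq> 0" and R: "r2 + m \<noteq> 0"
    and hp: "p = y - 2/((2+k)*y)" and hK0: "K0 = y + r2/(r2+m)" and hd: "d = m/((2+k)*(r2+m)*y)"
    and hK: "K = K0 - k*d" and hZ: "Z = 2*m*k/((2+k)^2*y^2*(r2+m))"
  shows "(y^2 - 2/(2+k)) * K0 * (1 - d*k/K0) * (1 - Z/(p*K))
     = (y+1) * ((y+1)^2 - (2 + m/(r2+m))*(y+1) + (2*m/(r2+m) + k*r2/((2+k)*(r2+m))))"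
proof -
  have 1: "K0 * (1 - d*k/K0) = K" unfolding hK using K0 by (simp add: right_diff_distrib)
  have 2: "y^2 - 2/(2+k) = y * p" unfolding hp using y k by (simp add: right_diff_distrib power2_eq_square)
  have "(y^2 - 2/(2+k)) * K0 * (1 - d*k/K0) * (1 - Z/(p*K)) = y * (p * (K0 * (1 - d*k/K0))) * (1 - Z/(p*K))"
    unfolding 2 by (simp only: ac_simps)
  also have "\<dots> = y * ((p * K) * (1 - Z/(p*K)))" unfolding 1 by (simp only: ac_simps)
  also have "\<dots> = y * (p * K - Z)" using p0 K by (simp add: right_diff_distrib)
  also have "\<dots> = (y+1) * ((y+1)^2 - (2 + m/(r2+m))*(y+1) + (2*m/(r2+m) + k*r2/((2+k)*(r2+m))))"
  proof -
    define u where "u = 1/(2+k)"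
    define w where "w = 1/(r2+m)"
    define iy where "iy = 1/y"
    have hu: "u * (2+k) = 1" and hw: "w * (r2+m) = 1" and hy: "iy * y = 1"
      using k R y by (auto simp: u_def w_def iy_def)
    have e1: "p = y - 2*u*iy" unfolding hp u_def iy_def by simp
    have e2: "K0 = y + r2*w" unfolding hK0 w_def by simp
    have e3: "d = m*u*w*iy" unfolding hd u_def w_def iy_def by simp
    have e4: "Z = 2*m*k*u^2*iy^2*w" unfolding hZ u_def w_def iy_def by (simp add: power2_eq_square)
    have e5: "m/(r2+m) = m*w" "k*r2/((2+k)*(r2+m)) = k*r2*u*w" "2*m/(r2+m) = 2*m*w"
      unfolding u_def w_def by simp_all
    have "y * ((y - 2 * u * iy) * (y + r2 * w - k * (m * u * w * iy)) - 2 * m * k * u^2 * iy^2 * w) -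
        (y + 1) * ((y + 1)^2 - (2 + m * w) * (y + 1) + (2 * m * w + k * r2 * u * w))
      = (iy*y - 1)*(-k*m*u*w*y - 2*u*y - 2*u*r2*w) + (w*(r2+m) - 1)*(y^2 - k*u*y - 1) - (u*(2+k) - 1)*(y + r2*w)"
      by (simp add: algebra_simps power2_eq_square)
    also have "\<dots> = 0" using hu hw hy by simp
    finally show ?thesis unfolding e1 hK e2 e3 e4 e5 by simp
  qed
  finally show ?thesis .
qed

lemma prod_factor:
  fixes c t :: real
  assumes "n \<ge> 1"
  shows "c ^ n * t * (\<Prod>i\<in>{1..<n}. t - f i) = (c * t) * (\<Prod>i\<in>{1..<n}. c * (t - f i))"
proof -
  have "(\<Prod>i\<in>{1..<n}. c * (t - f i)) = c ^ (n - 1) * (\<Prod>i\<in>{1..<n}. t - f i)"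
    by (simp add: prod.distrib)
  moreover have "c ^ n = c * c ^ (n - 1)" using assms by (cases n) auto
  ultimately show ?thesis by (simp add: ac_simps)
qed

lemma poly_prod_lin: "poly (\<Prod>a\<leftarrow>xs. [:- a, 1:]) t = (\<Prod>a\<leftarrow>xs. t - (a::real))"
  by (induct xs) (auto simp: algebra_simps)

lemma shift_bij: "bij_betw (\<lambda>i. i - m) {m..<m+n} {..<(n::nat)}"
  by (rule bij_betw_byWitness[where f'="\<lambda>i. i + m"]) auto

lemma main_eval:
  fixes V1 :: "'a set" and E1 :: "'a set set" and V2 :: "'b set" and E2 :: "'b set set"
    and r1 r2 n1 n2 m1 :: nat and mu nu :: "real list" and x :: real
  assumes G1: "simple_graph V1 E1" and G2: "simple_graph V2 E2"
    and reg1: "regular V1 E1 r1" and r1: "r1 \<ge> 1"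
    and reg2: "regular V2 E2 r2" and r2: "r2 \<ge> 1"
    and n1: "card V1 = n1" and n1_pos: "n1 \<ge> 1"
    and m1: "card E1 = m1"
    and n2: "card V2 = n2" and n2_pos: "n2 \<ge> 1"
    and mu: "length mu = n1" "mu ! 0 = 0"
      "char_poly (nlap_matrix V1 E1) = (\<Prod>a\<leftarrow>mu. [:- a, 1:])"
    and nu: "length nu = n2" "nu ! 0 = 0"
      "char_poly (nlap_matrix V2 E2) = (\<Prod>a\<leftarrow>nu. [:- a, 1:])"
    and x: "x > 3"
  shows "poly (char_poly (nlap_matrix (sej_vertices V1 E1 V2) (sej_edges V1 E1 V2 E2))) x * (x - 1) ^ n1 =
      x * (x - 1) ^ m1
      * (x^2 - (2 + real m1 / (real r2 + real m1)) * x + (2 * real m1 / (real r2 + real m1)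
            + real n2 * real r2 / ((2 + real n2) * (real r2 + real m1))))
      * (\<Prod>i\<in>{1..<n1}. (x - 1)^2 - (2 - mu ! i) / (2 + real n2))
      * (\<Prod>i\<in>{1..<n2}. x - (real m1 + real r2 * nu ! i) / (real r2 + real m1))"
proof -
  let ?SV = "sej_vertices V1 E1 V2" and ?SE = "sej_edges V1 E1 V2 E2"
  have fV1: "finite V1" and fV2: "finite V2" and fE1: "finite E1"
    using sg_finite[OF G1] sg_finite[OF G2] sg_finite_E[OF G1] by auto
  define e1 where "e1 = vertex_enum V1"
  define e2 where "e2 = vertex_enum V2"
  define eE where "eE = vertex_enum E1"
  have be1: "bij_betw e1 {..<n1} V1" using enum_bij[OF fV1] n1 by (simp add: e1_def)
  have be2: "bij_betw e2 {..<n2} V2" using enum_bij[OF fV2] n2 by (simp add: e2_def)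
  have beE: "bij_betw eE {..<m1} E1" using enum_bij[OF fE1] m1 by (simp add: eE_def)
  have e1_in: "i < n1 \<Longrightarrow> e1 i \<in> V1" for i using be1 by (auto dest: bij_betwE)
  have e2_in: "i < n2 \<Longrightarrow> e2 i \<in> V2" for i using be2 by (auto dest: bij_betwE)
  have eE_in: "i < m1 \<Longrightarrow> eE i \<in> E1" for i using beE by (auto dest: bij_betwE)
  have e1_inj: "i < n1 \<Longrightarrow> j < n1 \<Longrightarrow> e1 i = e1 j \<longleftrightarrow> i = j" for i j
    using be1 by (auto simp: bij_betw_def inj_on_def)
  have e2_inj: "i < n2 \<Longrightarrow> j < n2 \<Longrightarrow> e2 i = e2 j \<longleftrightarrow> i = j" for i j
    using be2 by (auto simp: bij_betw_def inj_on_def)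
  have eE_inj: "i < m1 \<Longrightarrow> j < m1 \<Longrightarrow> eE i = eE j \<longleftrightarrow> i = j" for i j
    using beE by (auto simp: bij_betw_def inj_on_def)
  define N where "N = m1 + (n1 + n2)"
  define g where "g = (\<lambda>i. if i < m1 then Inl (Inr (eE i)) else if i < m1 + n1 then Inl (Inl (e1 (i - m1)))
     else Inr (e2 (i - m1 - n1)))"
  have bg: "bij_betw g {..<N} ?SV"
  proof -
    have b1: "bij_betw g {..<m1} ((Inl \<circ> Inr) ` E1)"
    proof (rule bij_betw_cong[THEN iffD1])
      show "bij_betw ((Inl \<circ> Inr) \<circ> eE) {..<m1} ((Inl \<circ> Inr) ` E1)"
        by (rule bij_betw_trans[OF beE]) (rule inj_on_imp_bij_betw, auto simp: inj_on_def)
    qed (auto simp: g_def)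
    have b2: "bij_betw g {m1..<m1+n1} ((Inl \<circ> Inl) ` V1)"
    proof (rule bij_betw_cong[THEN iffD1])
      show "bij_betw ((Inl \<circ> Inl) \<circ> e1 \<circ> (\<lambda>i. i - m1)) {m1..<m1+n1} ((Inl \<circ> Inl) ` V1)"
        by (intro bij_betw_trans[OF shift_bij] bij_betw_trans[OF be1])
           (rule inj_on_imp_bij_betw, auto simp: inj_on_def)
    qed (auto simp: g_def)
    have b3: "bij_betw g {m1+n1..<m1+n1+n2} (Inr ` V2)"
    proof (rule bij_betw_cong[THEN iffD1])
      show "bij_betw (Inr \<circ> e2 \<circ> (\<lambda>i. i - (m1 + n1))) {m1+n1..<m1+n1+n2} (Inr ` V2)"
        by (intro bij_betw_trans[OF shift_bij] bij_betw_trans[OF be2])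
           (rule inj_on_imp_bij_betw, auto simp: inj_on_def)
    qed (auto simp: g_def)
    have "bij_betw g ({..<m1} \<union> ({m1..<m1+n1} \<union> {m1+n1..<m1+n1+n2}))
        ((Inl \<circ> Inr) ` E1 \<union> ((Inl \<circ> Inl) ` V1 \<union> Inr ` V2))"
      by (intro bij_betw_combine[OF b1] bij_betw_combine[OF b2 b3]) auto
    moreover have "{..<m1} \<union> ({m1..<m1+n1} \<union> {m1+n1..<m1+n1+n2}) = {..<N}" unfolding N_def by auto
    moreover have "(Inl \<circ> Inr) ` E1 \<union> ((Inl \<circ> Inl) ` V1 \<union> Inr ` V2) = ?SV"
      unfolding sej_vertices_def by auto
    ultimately show ?thesis by simp
  qed
  have cSV: "card ?SV = N" using bij_betw_same_card[OF bg] by simp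
  have fSV: "finite ?SV" using cSV N_def n1_pos card.infinite by fastforce
  define ve where "ve = vertex_enum ?SV"
  have bve: "bij_betw ve {..<N} ?SV" using enum_bij[OF fSV] cSV by (simp add: ve_def)
  define F where "F = (\<lambda>u v. (if u = v then x else 0) - nlap_entry ?SE u v)"
  define MG where "MG = mat N N (\<lambda>(i,j). F (g i) (g j))"
  have step1: "poly (char_poly (nlap_matrix ?SV ?SE)) x = det MG"
  proof -
    have "poly (char_poly (nlap_matrix ?SV ?SE)) x
      = det (mat N N (\<lambda>(i,j). (if i = j then x else 0) - nlap_matrix ?SV ?SE $$ (i,j)))"
      by (rule char_poly_eval) (simp add: nlap_matrix_def cSV)
    also have "mat N N (\<lambda>(i,j). (if i = j then x else 0) - nlap_matrix ?SV ?SE $$ (i,j))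
       = mat N N (\<lambda>(i,j). F (ve i) (ve j))"
      using bve by (intro eq_matI) (auto simp: nlap_matrix_def cSV F_def ve_def bij_betw_def inj_on_def)
    also have "det \<dots> = det MG" unfolding MG_def by (rule det_enum_change[OF bve bg])
    finally show ?thesis .
  qed
  define y where "y = x - 1"
  define R2 where "R2 = real r2 + real m1"
  define a where "a = 1 / sqrt ((2 + real n2) * real r1)"
  define b where "b = 1 / sqrt ((2 + real n2) * R2)"
  define B where "B = mat m1 (n1+n2) (\<lambda>(l,j). if j < n1 then (if e1 j \<in> eE l then a else 0) else b)"
  define Cm where "Cm = mat (n1+n2) m1 (\<lambda>(j,l). if j < n1 then (if e1 j \<in> eE l then a else 0) else b)"
  define D where "D = mat (n1+n2) (n1+n2) (\<lambda>(i,j). if i < n1 then (if j < n1 \<and> i = j then y else 0)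
     else if j < n1 then 0 else (if i = j then y else 0) + (if {e2 (i - n1), e2 (j - n1)} \<in> E2 then 1 / R2 else 0))"
  note ne = ne_EE[OF G1 G2 reg1 reg2] ne_EV[OF G1 G2 reg1 reg2] ne_VE[OF G1 G2 reg1 reg2]
    ne_EW[OF G1 G2 reg1 reg2] ne_WE[OF G1 G2 reg1 reg2] ne_VV[OF G1 G2 reg1 reg2]
    ne_VW[OF G1 G2 reg1 reg2] ne_WV[OF G1 G2 reg1 reg2] ne_WW[OF G1 G2 reg1 reg2]
  have MGblock: "MG = four_block_mat (y \<cdot>\<^sub>m 1\<^sub>m m1) B Cm D"
  proof (rule eq_matI)
    fix i j assume i: "i < dim_row (four_block_mat (y \<cdot>\<^sub>m 1\<^sub>m m1) B Cm D)"
      and j: "j < dim_col (four_block_mat (y \<cdot>\<^sub>m 1\<^sub>m m1) B Cm D)"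
    have i': "i < N" and j': "j < N" using i j by (auto simp: N_def B_def D_def)
    show "MG $$ (i,j) = four_block_mat (y \<cdot>\<^sub>m 1\<^sub>m m1) B Cm D $$ (i,j)"
    proof -
      have dims: "dim_row (y \<cdot>\<^sub>m 1\<^sub>m m1) = m1" "dim_col (y \<cdot>\<^sub>m 1\<^sub>m m1) = m1"
        "dim_row D = n1 + n2" "dim_col D = n1 + n2" by (auto simp: D_def)
      have fb: "four_block_mat (y \<cdot>\<^sub>m 1\<^sub>m m1) B Cm D $$ (i,j) =
        (if i < m1 then if j < m1 then (y \<cdot>\<^sub>m 1\<^sub>m m1) $$ (i,j) else B $$ (i,j - m1)
         else if j < m1 then Cm $$ (i - m1, j) else D $$ (i - m1, j - m1))"
        using i j by (simp add: dims)
      note simps = MG_def F_def g_def ne n2 m1 a_def b_def R2_def y_def B_def Cm_def D_def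
      consider "i < m1" | "m1 \<le> i" "i < m1 + n1" | "m1 + n1 \<le> i" by linarith
      then show ?thesis
      proof cases
        case i1: 1
        have ei: "eE i \<in> E1" using i1 eE_in by simp
        consider "j < m1" | "m1 \<le> j" "j < m1 + n1" | "m1 + n1 \<le> j" by linarith
        then show ?thesis
        proof cases
          case j1: 1
          thus ?thesis using i1 i' j' unfolding fb by (simp add: simps eE_inj)
        next
          case j2: 2
          have jj: "j - m1 < n1" using j2 by linarith
          hence "e1 (j - m1) \<in> V1" by (rule e1_in)
          thus ?thesis using i1 j2 ei i' j' jj unfolding fb by (simp add: simps)
        next
          case j3: 3
          have jj: "j - m1 - n1 < n2" "\<not> j - m1 < n1" using j3 j' N_def by linarith+
          hence "e2 (j - m1 - n1) \<in> V2" by (intro e2_in)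
          thus ?thesis using i1 j3 ei i' j' jj unfolding fb by (simp add: simps)
        qed
      next
        case i2: 2
        have ii: "i - m1 < n1" using i2 by linarith
        hence vi: "e1 (i - m1) \<in> V1" by (rule e1_in)
        consider "j < m1" | "m1 \<le> j" "j < m1 + n1" | "m1 + n1 \<le> j" by linarith
        then show ?thesis
        proof cases
          case j1: 1
          hence "eE j \<in> E1" using eE_in by simp
          thus ?thesis using j1 i2 vi i' j' ii unfolding fb by (simp add: simps)
        next
          case j2: 2
          have "j - m1 < n1" using j2 by linarith
          thus ?thesis using i2 j2 vi i' j' ii unfolding fb by (simp add: simps e1_inj)
        next
          case j3: 3
          have jj: "j - m1 - n1 < n2" "\<not> j - m1 < n1" using j3 j' N_def by linarith+
          thus ?thesis using i2 j3 vi i' j' ii unfolding fb by (simp add: simps)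
        qed
      next
        case i3: 3
        have ii: "i - m1 - n1 < n2" "\<not> i - m1 < n1" using i3 i' N_def by linarith+
        hence wi: "e2 (i - m1 - n1) \<in> V2" by (intro e2_in)
        consider "j < m1" | "m1 \<le> j" "j < m1 + n1" | "m1 + n1 \<le> j" by linarith
        then show ?thesis
        proof cases
          case j1: 1
          hence "eE j \<in> E1" using eE_in by simp
          thus ?thesis using j1 i3 wi i' j' ii unfolding fb by (simp add: simps)
        next
          case j2: 2
          have jj: "j - m1 < n1" using j2 by linarith
          thus ?thesis using j2 i3 wi i' j' ii unfolding fb by (simp add: simps)
        next
          case j3: 3
          have jj: "j - m1 - n1 < n2" "\<not> j - m1 < n1" using j3 j' N_def by linarith+
          hence "e2 (j - m1 - n1) \<in> V2" by (intro e2_in)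
          thus ?thesis using i3 j3 wi i' j' ii jj unfolding fb
            by (simp add: simps e2_inj) linarith
        qed
      qed
    qed
  qed (auto simp: MG_def N_def B_def D_def)
  have y2: "y > 2" using x by (simp add: y_def)
  hence y0: "y \<noteq> 0" by simp
  have Bc: "B \<in> carrier_mat m1 (n1+n2)" and Cmc: "Cm \<in> carrier_mat (n1+n2) m1"
    and Dc: "D \<in> carrier_mat (n1+n2) (n1+n2)" by (auto simp: B_def Cm_def D_def)
  have step2: "det MG = y ^ m1 * det (D - (1/y) \<cdot>\<^sub>m (Cm * B))"
    unfolding MGblock by (rule det_schur_scalar[OF Bc Cmc Dc y0])
  define P' where "P' = mat n1 n1 (\<lambda>(i,j). (if i = j then y else 0)
     - (1/y) * (a*a) * (if i = j then real r1 else if {e1 i, e1 j} \<in> E1 then 1 else 0))"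
  define q where "q = - (1/y) * (a * b * real r1)"
  define C0 where "C0 = mat n2 n2 (\<lambda>(i,j). (if i = j then y else 0) + (if {e2 i, e2 j} \<in> E2 then 1 / R2 else 0))"
  define d where "d = (1/y) * (b * b * real m1)"
  define C' where "C' = mat n2 n2 (\<lambda>(i,j). C0 $$ (i,j) - d)"
  have deg1: "v \<in> V1 \<Longrightarrow> degree E1 v = r1" for v using reg1 by (simp add: regular_def)
  have deg2: "v \<in> V2 \<Longrightarrow> degree E2 v = r2" for v using reg2 by (simp add: regular_def)
  have h1: "(\<Sum>l = 0..<m1. (if u \<in> eE l then a else 0) * (if v \<in> eE l then a else 0))
      = a * a * (if u = v then real r1 else if {u,v} \<in> E1 then 1 else 0)" if u: "u \<in> V1" and v: "v \<in> V1" for u v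
  proof -
    have "(\<Sum>l = 0..<m1. (if u \<in> eE l then a else 0) * (if v \<in> eE l then a else 0))
        = a * a * (\<Sum>l<m1. if u \<in> eE l \<and> v \<in> eE l then 1 else 0)"
      by (simp add: sum_distrib_left lessThan_atLeast0 if_distrib cong: if_cong) (intro sum.cong; auto)
    also have "(\<Sum>l<m1. if u \<in> eE l \<and> v \<in> eE l then 1 else 0) = (\<Sum>e\<in>E1. if u \<in> e \<and> v \<in> e then 1 else (0::real))"
      by (rule sum.reindex_bij_betw[OF beE])
    also have "\<dots> = real (card {e\<in>E1. u \<in> e \<and> v \<in> e})" by (rule sum_indicator[OF fE1])
    also have "\<dots> = (if u = v then real r1 else if {u,v} \<in> E1 then 1 else 0)"
      using common_edges[OF G1 u v] deg1[OF u] deg1[OF v] by simp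
    finally show ?thesis .
  qed
  have h2: "(\<Sum>l = 0..<m1. (if u \<in> eE l then a else 0) * b) = a * b * real r1" if u: "u \<in> V1" for u
  proof -
    have "(\<Sum>l = 0..<m1. (if u \<in> eE l then a else 0) * b) = a * b * (\<Sum>l<m1. if u \<in> eE l then 1 else 0)"
      by (simp add: sum_distrib_left lessThan_atLeast0 if_distrib cong: if_cong) (intro sum.cong; auto)
    also have "(\<Sum>l<m1. if u \<in> eE l then 1 else 0) = real (degree E1 u)" by (rule enum_sum_edges[OF G1 beE])
    finally show ?thesis using deg1[OF u] by simp
  qed
  have Sblock: "D - (1/y) \<cdot>\<^sub>m (Cm * B) = four_block_mat P' (mat n1 n2 (\<lambda>_. q)) (mat n2 n1 (\<lambda>_. q)) C'"
  proof (rule eq_matI)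
    fix i j assume i: "i < dim_row (four_block_mat P' (mat n1 n2 (\<lambda>_. q)) (mat n2 n1 (\<lambda>_. q)) C')"
      and j: "j < dim_col (four_block_mat P' (mat n1 n2 (\<lambda>_. q)) (mat n2 n1 (\<lambda>_. q)) C')"
    have i': "i < n1 + n2" and j': "j < n1 + n2" using i j by (auto simp: P'_def C'_def)
    have CB: "(Cm * B) $$ (i,j) = (\<Sum>l = 0..<m1. Cm $$ (i,l) * B $$ (l,j))"
      using i' j' by (simp add: Cm_def B_def scalar_prod_def)
    have lhs: "(D - (1/y) \<cdot>\<^sub>m (Cm * B)) $$ (i,j) = D $$ (i,j) - (1/y) * (\<Sum>l = 0..<m1. Cm $$ (i,l) * B $$ (l,j))"
      using i' j' CB by (simp add: D_def Cm_def B_def)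
    have CBs: "(\<Sum>l = 0..<m1. Cm $$ (i,l) * B $$ (l,j)) = (\<Sum>l = 0..<m1.
       (if i < n1 then (if e1 i \<in> eE l then a else 0) else b) * (if j < n1 then (if e1 j \<in> eE l then a else 0) else b))"
      by (rule sum.cong) (auto simp: Cm_def B_def i' j')
    have fb: "four_block_mat P' (mat n1 n2 (\<lambda>_. q)) (mat n2 n1 (\<lambda>_. q)) C' $$ (i,j) =
       (if i < n1 then if j < n1 then P' $$ (i,j) else q else if j < n1 then q else C' $$ (i - n1, j - n1))"
      using i' j' by (simp add: P'_def C'_def)
    show "(D - (1/y) \<cdot>\<^sub>m (Cm * B)) $$ (i,j) = four_block_mat P' (mat n1 n2 (\<lambda>_. q)) (mat n2 n1 (\<lambda>_. q)) C' $$ (i,j)"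
    proof (cases "i < n1"; cases "j < n1")
      assume ii: "i < n1" and jj: "j < n1"
      have "e1 i \<in> V1" "e1 j \<in> V1" using ii jj e1_in by auto
      thus ?thesis unfolding lhs fb CBs using ii jj h1[of "e1 i" "e1 j"] e1_inj[OF ii jj]
        by (simp add: D_def P'_def)
    next
      assume ii: "i < n1" and jj: "\<not> j < n1"
      have "e1 i \<in> V1" using ii e1_in by auto
      thus ?thesis unfolding lhs fb CBs using ii jj i' j' h2[of "e1 i"] by (simp add: D_def q_def)
    next
      assume ii: "\<not> i < n1" and jj: "j < n1"
      have "e1 j \<in> V1" using jj e1_in by auto
      thus ?thesis unfolding lhs fb CBs using ii jj i' j' h2[of "e1 j"] by (simp add: D_def q_def mult.commute[of b])
    next
      assume ii: "\<not> i < n1" and jj: "\<not> j < n1"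
      have "i - n1 = j - n1 \<longleftrightarrow> i = j" using ii jj by linarith
      thus ?thesis unfolding lhs fb CBs using ii jj i' j' by (simp add: D_def C'_def C0_def d_def)
    qed
  qed (auto simp: P'_def C'_def D_def Cm_def B_def)
  define c2 where "c2 = 2 + real n2"
  have c2p: "c2 > 0" and c20: "c2 \<noteq> 0" by (auto simp: c2_def)
  have R2p: "R2 > 0" and R20: "R2 \<noteq> 0" using r2 by (auto simp: R2_def)
  have r10: "real r1 \<noteq> 0" and r20: "real r2 \<noteq> 0" using r1 r2 by auto
  have aa: "a * a = 1 / (c2 * real r1)" unfolding a_def c2_def by simp
  have bb: "b * b = 1 / (c2 * R2)" unfolding b_def c2_def using R2p by simp
  define p where "p = y - (1/y) * (a*a) * (2 * real r1)"
  define K0 where "K0 = y + real r2 / R2"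
  define K where "K = K0 - real n2 * d"
  have hp: "p = y - 2 / ((2 + real n2) * y)" unfolding p_def aa c2_def using r10 y0 by simp
  have hd: "d = real m1 / ((2 + real n2) * (real r2 + real m1) * y)"
    unfolding d_def bb c2_def R2_def using y0 by simp
  have hK0: "K0 = y + real r2 / (real r2 + real m1)" unfolding K0_def R2_def ..
  have hs: "real n1 * real r1 = 2 * real m1"
  proof -
    have "(\<Sum>v\<in>V1. degree E1 v) = n1 * r1" using deg1 n1 by simp
    thus ?thesis using handshake[OF G1] m1 by (metis of_nat_mult of_nat_numeral)
  qed
  have aa': "(1/y) * (a*a) * real r1 = 1 / (c2 * y)" using r10 y0 unfolding aa by simp
  have P'c: "P' \<in> carrier_mat n1 n1" and C0c: "C0 \<in> carrier_mat n2 n2" and C'c: "C' \<in> carrier_mat n2 n2"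
    by (auto simp: P'_def C0_def C'_def)
  have rsP: "(\<Sum>j<n1. P' $$ (i,j)) = p" if i: "i < n1" for i
  proof -
    have "(\<Sum>j<n1. P' $$ (i,j)) = (\<Sum>j<n1. (if i = j then y - (1/y)*(a*a)*real r1 else 0)
        - (1/y)*(a*a) * (if {e1 i, e1 j} \<in> E1 then 1 else 0))"
      using i by (intro sum.cong) (auto simp: P'_def sg_no_loop[OF G1])
    also have "\<dots> = (y - (1/y)*(a*a)*real r1) - (1/y)*(a*a) * (\<Sum>j<n1. if {e1 i, e1 j} \<in> E1 then 1 else 0)"
      using i by (simp add: sum_subtractf sum_distrib_left)
    also have "(\<Sum>j<n1. if {e1 i, e1 j} \<in> E1 then 1 else 0) = real (degree E1 (e1 i))"
      by (rule enum_sum_nbrs[OF G1 be1 e1_in[OF i]])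
    finally show ?thesis using deg1[OF e1_in[OF i]] unfolding p_def by (simp add: algebra_simps)
  qed
  have rsC0: "(\<Sum>j<n2. C0 $$ (i,j)) = K0" if i: "i < n2" for i
  proof -
    have "(\<Sum>j<n2. C0 $$ (i,j)) = (\<Sum>j<n2. (if i = j then y else 0) + (1/R2) * (if {e2 i, e2 j} \<in> E2 then 1 else 0))"
      using i by (intro sum.cong) (auto simp: C0_def)
    also have "\<dots> = y + (1/R2) * (\<Sum>j<n2. if {e2 i, e2 j} \<in> E2 then 1 else 0)"
      using i by (simp add: sum.distrib sum_distrib_left)
    also have "(\<Sum>j<n2. if {e2 i, e2 j} \<in> E2 then 1 else 0) = real (degree E2 (e2 i))"
      by (rule enum_sum_nbrs[OF G2 be2 e2_in[OF i]])
    finally show ?thesis using deg2[OF e2_in[OF i]] unfolding K0_def by simp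
  qed
  have rsC': "(\<Sum>j<n2. C' $$ (i,j)) = K" if i: "i < n2" for i
  proof -
    have "(\<Sum>j<n2. C' $$ (i,j)) = (\<Sum>j<n2. C0 $$ (i,j) - d)" using i by (intro sum.cong) (auto simp: C'_def)
    also have "\<dots> = K0 - real n2 * d" using rsC0[OF i] by (simp add: sum_subtractf)
    finally show ?thesis unfolding K_def .
  qed
  have yc2: "2 < c2 * y"
  proof -
    have "2 * y \<le> c2 * y" using y2 by (intro mult_right_mono) (auto simp: c2_def)
    thus ?thesis using y2 by linarith
  qed
  have p_pos: "p > 0"
  proof -
    have h: "2 / (c2 * y) < 1" using yc2 by simp
    have hp': "p = y - 2 / (c2 * y)" using hp by (simp add: c2_def)
    show ?thesis using h hp' y2 by linarith
  qed
  have K0_pos: "K0 > 0" unfolding K0_def using y2 R2p by (simp add: add_pos_nonneg)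
  have K_pos: "K > 0"
  proof -
    have "real n2 * real m1 \<le> c2 * R2"
      by (intro mult_mono) (auto simp: c2_def R2_def)
    hence le1: "real n2 * real m1 / (c2 * R2) \<le> 1" using c2p R2p by simp
    have "real n2 * d = real n2 * real m1 / (c2 * R2) * (1/y)" unfolding hd c2_def R2_def by simp
    also have "\<dots> \<le> 1 * (1/y)" using le1 y2 by (intro mult_right_mono) auto
    also have "\<dots> < 1" using y2 by simp
    finally have "real n2 * d < 1" .
    moreover have "real r2 / R2 \<ge> 0" using R2p by simp
    ultimately show ?thesis unfolding K_def K0_def using y2 by linarith
  qed
  have step3: "det (D - (1/y) \<cdot>\<^sub>m (Cm * B)) = det P' * det C' * (1 - q * q * real n2 * real n1 / (p * K))"
    unfolding Sblock by (rule det_block_const[OF P'c rsP _ C'c rsC']) (use p_pos K_pos in auto)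
  have step4: "det C' = det C0 * (1 - d * real n2 / K0)"
    unfolding C'_def by (rule det_minus_const[OF C0c rsC0]) (use K0_pos in auto)
  define \<alpha> where "\<alpha> = 1 / (c2 * y)"
  define \<tau> where "\<tau> = 2 - c2 * y^2"
  note nle1 = nl_entry[OF G1 G2 reg1 reg2] and nle2 = nl_entry2[OF G1 G2 reg1 reg2]
  have NL1c: "nlap_matrix V1 E1 \<in> carrier_mat n1 n1" by (simp add: nlap_matrix_def n1)
  have NL2c: "nlap_matrix V2 E2 \<in> carrier_mat n2 n2" by (simp add: nlap_matrix_def n2)
  have NL1e: "nlap_matrix V1 E1 $$ (i,j) = (if i = j then 1 else 0) - (if {e1 i, e1 j} \<in> E1 then 1 / real r1 else 0)"
    if "i < n1" "j < n1" for i j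
    using that e1_in[OF that(1)] e1_in[OF that(2)] e1_inj[OF that]
    by (simp add: nlap_matrix_def n1 e1_def[symmetric] nle1)
  have NL2e: "nlap_matrix V2 E2 $$ (i,j) = (if i = j then 1 else 0) - (if {e2 i, e2 j} \<in> E2 then 1 / real r2 else 0)"
    if "i < n2" "j < n2" for i j
    using that e2_in[OF that(1)] e2_in[OF that(2)] e2_inj[OF that]
    by (simp add: nlap_matrix_def n2 e2_def[symmetric] nle2)
  have P'sm: "P' = (- \<alpha>) \<cdot>\<^sub>m mat n1 n1 (\<lambda>(i,j). (if i = j then \<tau> else 0) - nlap_matrix V1 E1 $$ (i,j))"
  proof (rule eq_matI)
    fix i j assume i: "i < dim_row (- \<alpha> \<cdot>\<^sub>m mat n1 n1 (\<lambda>(i,j). (if i = j then \<tau> else 0) - nlap_matrix V1 E1 $$ (i,j)))"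
      and j: "j < dim_col (- \<alpha> \<cdot>\<^sub>m mat n1 n1 (\<lambda>(i,j). (if i = j then \<tau> else 0) - nlap_matrix V1 E1 $$ (i,j)))"
    have i': "i < n1" and j': "j < n1" using i j by auto
    show "P' $$ (i,j) = (- \<alpha> \<cdot>\<^sub>m mat n1 n1 (\<lambda>(i,j). (if i = j then \<tau> else 0) - nlap_matrix V1 E1 $$ (i,j))) $$ (i,j)"
    proof (cases "i = j")
      case True
      have "{e1 j} \<notin> E1" by (rule sg_no_loop[OF G1])
      thus ?thesis using True i' j' NL1e[OF i' j'] aa' y0 c20
        by (simp add: P'_def \<alpha>_def \<tau>_def field_simps power2_eq_square)
    next
      case False
      thus ?thesis using i' j' NL1e[OF i' j'] r10 y0 c20
        by (simp add: P'_def \<alpha>_def aa field_simps)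
    qed
  qed (auto simp: P'_def)
  have step5: "det P' = (- \<alpha>) ^ n1 * poly (char_poly (nlap_matrix V1 E1)) \<tau>"
    unfolding P'sm by (simp add: char_poly_eval[OF NL1c])
  define \<rho> where "\<rho> = real r2 / R2"
  define \<sigma> where "\<sigma> = (y + \<rho>) / \<rho>"
  have \<rho>0: "\<rho> \<noteq> 0" using r20 R20 by (simp add: \<rho>_def)
  have C0sm: "C0 = \<rho> \<cdot>\<^sub>m mat n2 n2 (\<lambda>(i,j). (if i = j then \<sigma> else 0) - nlap_matrix V2 E2 $$ (i,j))"
  proof (rule eq_matI)
    fix i j assume i: "i < dim_row (\<rho> \<cdot>\<^sub>m mat n2 n2 (\<lambda>(i,j). (if i = j then \<sigma> else 0) - nlap_matrix V2 E2 $$ (i,j)))"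
      and j: "j < dim_col (\<rho> \<cdot>\<^sub>m mat n2 n2 (\<lambda>(i,j). (if i = j then \<sigma> else 0) - nlap_matrix V2 E2 $$ (i,j)))"
    have i': "i < n2" and j': "j < n2" using i j by auto
    show "C0 $$ (i,j) = (\<rho> \<cdot>\<^sub>m mat n2 n2 (\<lambda>(i,j). (if i = j then \<sigma> else 0) - nlap_matrix V2 E2 $$ (i,j))) $$ (i,j)"
    proof (cases "i = j")
      case True
      have "{e2 j} \<notin> E2" by (rule sg_no_loop[OF G2])
      thus ?thesis using True i' j' NL2e[OF i' j'] \<rho>0
        by (simp add: C0_def \<sigma>_def field_simps)
    next
      case False
      thus ?thesis using i' j' NL2e[OF i' j'] r20 R20
        by (simp add: C0_def \<rho>_def)
    qed
  qed (auto simp: C0_def)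
  have step6: "det C0 = \<rho> ^ n2 * poly (char_poly (nlap_matrix V2 E2)) \<sigma>"
    unfolding C0sm by (simp add: char_poly_eval[OF NL2c])
  have p1: "poly (char_poly (nlap_matrix V1 E1)) \<tau> = \<tau> * (\<Prod>i\<in>{1..<n1}. \<tau> - mu ! i)"
    unfolding mu(3) poly_prod_lin prod_map_split[OF mu(1) n1_pos, where f="\<lambda>a. \<tau> - a"] mu(2) by simp
  have p2: "poly (char_poly (nlap_matrix V2 E2)) \<sigma> = \<sigma> * (\<Prod>i\<in>{1..<n2}. \<sigma> - nu ! i)"
    unfolding nu(3) poly_prod_lin prod_map_split[OF nu(1) n2_pos, where f="\<lambda>a. \<sigma> - a"] nu(2) by simp
  define PA where "PA = (\<Prod>i\<in>{1..<n1}. (x - 1)^2 - (2 - mu ! i) / (2 + real n2))"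
  define PB where "PB = (\<Prod>i\<in>{1..<n2}. x - (real m1 + real r2 * nu ! i) / (real r2 + real m1))"
  have A: "(- \<alpha>) ^ n1 * y ^ n1 * (\<tau> * (\<Prod>i\<in>{1..<n1}. \<tau> - mu ! i)) = (y^2 - 2 / (2 + real n2)) * PA"
  proof -
    have "(- \<alpha>) ^ n1 * y ^ n1 = (- 1 / c2) ^ n1" using y0
      by (simp add: power_mult_distrib[symmetric] \<alpha>_def)
    hence "(- \<alpha>) ^ n1 * y ^ n1 * (\<tau> * (\<Prod>i\<in>{1..<n1}. \<tau> - mu ! i))
       = ((- 1 / c2) * \<tau>) * (\<Prod>i\<in>{1..<n1}. (- 1 / c2) * (\<tau> - mu ! i))"
      using prod_factor[OF n1_pos, of "- 1 / c2" \<tau> "\<lambda>i. mu ! i"] by (simp add: ac_simps)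
    also have "(- 1 / c2) * \<tau> = y^2 - 2 / (2 + real n2)" using c20 unfolding \<tau>_def c2_def
      by (simp add: field_simps)
    also have "(\<Prod>i\<in>{1..<n1}. (- 1 / c2) * (\<tau> - mu ! i)) = PA" unfolding PA_def
      by (rule prod.cong) (use c20 in \<open>auto simp: \<tau>_def c2_def y_def field_simps\<close>)
    finally show ?thesis .
  qed
  have B: "\<rho> ^ n2 * (\<sigma> * (\<Prod>i\<in>{1..<n2}. \<sigma> - nu ! i)) = K0 * PB"
  proof -
    have "\<rho> ^ n2 * (\<sigma> * (\<Prod>i\<in>{1..<n2}. \<sigma> - nu ! i)) = (\<rho> * \<sigma>) * (\<Prod>i\<in>{1..<n2}. \<rho> * (\<sigma> - nu ! i))"
      using prod_factor[OF n2_pos, of \<rho> \<sigma> "\<lambda>i. nu ! i"] by (simp add: ac_simps)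
    also have "\<rho> * \<sigma> = K0" using \<rho>0 unfolding \<sigma>_def K0_def \<rho>_def by simp
    also have "(\<Prod>i\<in>{1..<n2}. \<rho> * (\<sigma> - nu ! i)) = PB"
    proof -
      have pw: "\<rho> * (\<sigma> - t) = x - (real m1 + real r2 * t) / R2" for t
      proof -
        have 1: "\<rho> * (\<sigma> - t) = y + \<rho> - \<rho> * t" using \<rho>0 unfolding \<sigma>_def by (simp add: right_diff_distrib)
        have hm: "real m1 = R2 - real r2" by (simp add: R2_def)
        have 2: "y + \<rho> - \<rho> * t = x - (R2 - real r2 + real r2 * t) / R2"
          using R20 unfolding \<rho>_def y_def by (simp add: diff_divide_distrib add_divide_distrib)
        show ?thesis unfolding 1 2 hm ..
      qed
      show ?thesis unfolding PB_def R2_def[symmetric] by (simp add: pw)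
    qed
    finally show ?thesis .
  qed
  have hZ: "q * q * real n2 * real n1 = 2 * real m1 * real n2 / ((2 + real n2)^2 * y^2 * (real r2 + real m1))"
  proof -
    have "q * q = (1/y)^2 * (a*a) * (b*b) * real r1 ^ 2" unfolding q_def by (simp add: power2_eq_square ac_simps)
    also have "\<dots> = real r1 / (c2^2 * y^2 * R2)" unfolding aa bb using r10 y0 c20 R20
      by (simp add: power2_eq_square)
    finally have "q * q = real r1 / (c2^2 * y^2 * R2)" .
    hence "q * q * real n2 * real n1 = (real n1 * real r1) * real n2 / (c2^2 * y^2 * R2)" by simp
    also have "\<dots> = 2 * real m1 * real n2 / (c2^2 * y^2 * R2)" using hs by simp
    finally show ?thesis unfolding c2_def R2_def .
  qed
  have SC: "(y^2 - 2/(2 + real n2)) * K0 * (1 - d * real n2 / K0) * (1 - q * q * real n2 * real n1 / (p * K))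
     = (y+1) * ((y+1)^2 - (2 + real m1/(real r2 + real m1))*(y+1) + (2 * real m1/(real r2 + real m1)
        + real n2 * real r2 / ((2 + real n2) * (real r2 + real m1))))"
    by (rule scalar_id[OF y0 _ _ _ _ _ hp hK0 hd K_def hZ]) (use K0_pos p_pos K_pos R2p in \<open>auto simp: R2_def\<close>)
  have "poly (char_poly (nlap_matrix ?SV ?SE)) x * (x - 1) ^ n1
      = y ^ m1 * (det P' * det C' * (1 - q * q * real n2 * real n1 / (p * K))) * y ^ n1"
    using step1 step2 step3 by (simp add: y_def)
  also have "\<dots> = y ^ m1 * ((- \<alpha>) ^ n1 * y ^ n1 * (\<tau> * (\<Prod>i\<in>{1..<n1}. \<tau> - mu ! i)))
      * (\<rho> ^ n2 * (\<sigma> * (\<Prod>i\<in>{1..<n2}. \<sigma> - nu ! i))) * (1 - d * real n2 / K0)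
      * (1 - q * q * real n2 * real n1 / (p * K))"
    unfolding step4 step5 step6 p1 p2 by (simp add: ac_simps)
  also have "\<dots> = y ^ m1 * ((y^2 - 2/(2 + real n2)) * K0 * (1 - d * real n2 / K0)
      * (1 - q * q * real n2 * real n1 / (p * K))) * PA * PB"
    unfolding A B by (simp add: ac_simps)
  also have "\<dots> = x * (x - 1) ^ m1
      * (x^2 - (2 + real m1 / (real r2 + real m1)) * x + (2 * real m1 / (real r2 + real m1)
            + real n2 * real r2 / ((2 + real n2) * (real r2 + real m1)))) * PA * PB"
    unfolding SC by (simp add: y_def ac_simps)
  finally show ?thesis unfolding PA_def PB_def .
qed


theorem theorem2p4:
  fixes V1 :: "'a set" and E1 :: "'a set set" and V2 :: "'b set" and E2 :: "'b set set"
    and r1 r2 n1 n2 m1 :: nat and mu nu :: "real list"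
  assumes G1: "simple_graph V1 E1" and G2: "simple_graph V2 E2"
    and reg1: "regular V1 E1 r1" and r1: "r1 \<ge> 1"
    and reg2: "regular V2 E2 r2" and r2: "r2 \<ge> 1"
    and n1: "card V1 = n1" and n1_pos: "n1 \<ge> 1"
    and m1: "card E1 = m1"
    and n2: "card V2 = n2" and n2_pos: "n2 \<ge> 1"
    and mu: "length mu = n1" "mu ! 0 = 0"
      "char_poly (nlap_matrix V1 E1) = (\<Prod>a\<leftarrow>mu. [:- a, 1:])"
    and nu: "length nu = n2" "nu ! 0 = 0"
      "char_poly (nlap_matrix V2 E2) = (\<Prod>a\<leftarrow>nu. [:- a, 1:])"
  shows "char_poly (nlap_matrix (sej_vertices V1 E1 V2) (sej_edges V1 E1 V2 E2)) * [:-1, 1:] ^ n1 =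
      [:0, 1:] * [:-1, 1:] ^ m1
      * [: 2 * real m1 / (real r2 + real m1)
            + real n2 * real r2 / ((2 + real n2) * (real r2 + real m1)),
           - (2 + real m1 / (real r2 + real m1)), 1 :]
      * (\<Prod>i\<in>{1..<n1}. [: 1 - (2 - mu ! i) / (2 + real n2), -2, 1 :])
      * (\<Prod>i\<in>{1..<n2}. [: - ((real m1 + real r2 * nu ! i) / (real r2 + real m1)), 1 :])"
    (is "?L = ?R")
proof -
  have ev: "poly (?L - ?R) x = 0" if x: "x > 3" for x
  proof -
    have "poly ?L x = poly (char_poly (nlap_matrix (sej_vertices V1 E1 V2) (sej_edges V1 E1 V2 E2))) x * (x - 1) ^ n1"
      by simp
    also have "\<dots> = x * (x - 1) ^ m1
      * (x^2 - (2 + real m1 / (real r2 + real m1)) * x + (2 * real m1 / (real r2 + real m1)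
            + real n2 * real r2 / ((2 + real n2) * (real r2 + real m1))))
      * (\<Prod>i\<in>{1..<n1}. (x - 1)^2 - (2 - mu ! i) / (2 + real n2))
      * (\<Prod>i\<in>{1..<n2}. x - (real m1 + real r2 * nu ! i) / (real r2 + real m1))"
      by (rule main_eval[OF assms x])
    also have "\<dots> = poly ?R x"
    proof -
      have q: "x^2 - (2 + real m1 / (real r2 + real m1)) * x + (2 * real m1 / (real r2 + real m1)
            + real n2 * real r2 / ((2 + real n2) * (real r2 + real m1)))
         = poly [: 2 * real m1 / (real r2 + real m1)
            + real n2 * real r2 / ((2 + real n2) * (real r2 + real m1)),
           - (2 + real m1 / (real r2 + real m1)), 1 :] x"
        by (simp add: algebra_simps power2_eq_square)
      have pa: "(\<Prod>i\<in>{1..<n1}. (x - 1)^2 - (2 - mu ! i) / (2 + real n2))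
         = poly (\<Prod>i\<in>{1..<n1}. [: 1 - (2 - mu ! i) / (2 + real n2), -2, 1 :]) x"
        by (simp add: poly_prod algebra_simps power2_eq_square)
      have pb: "(\<Prod>i\<in>{1..<n2}. x - (real m1 + real r2 * nu ! i) / (real r2 + real m1))
         = poly (\<Prod>i\<in>{1..<n2}. [: - ((real m1 + real r2 * nu ! i) / (real r2 + real m1)), 1 :]) x"
        by (simp add: poly_prod)
      show ?thesis unfolding q pa pb by (simp add: algebra_simps)
    qed
    finally show ?thesis by simp
  qed
  show ?thesis
  proof (rule ccontr)
    assume "?L \<noteq> ?R"
    hence "?L - ?R \<noteq> 0" by simp
    hence fin: "finite {x. poly (?L - ?R) x = 0}" by (rule poly_roots_finite)
    have "{3::real<..} \<subseteq> {x. poly (?L - ?R) x = 0}" using ev by auto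
    hence "finite {3::real<..}" using fin finite_subset by blast
    thus False using infinite_Ioi by blast
  qed
qed

end
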